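(* Let $\mathcal{A}$ be a resolver-trim history-deterministic generalised Büchi automaton with $n_{\mathcal{A}}$ states. If there exists a deterministic Büchi automaton $\mathcal{B}$ with $n_{\mathcal{B}}$ states such that $\mathcal{L}(\mathcal{B})=\mathcal{L}(\mathcal{A})$, then $\mathcal{A}$ can be recoloured to obtain a resolver-trim history-deterministic generalised Büchi automaton recognising $\mathcal{L}(\mathcal{A})$, with $n_{\mathcal{A}}$ states and using at most $n_{\mathcal{A}}n_{\mathcal{B}}$ output colours.
   Context: An automaton is a tuple $(Q,\Sigma,q_{\mathrm{init}},\Delta,\Gamma,\mathrm{col},W)$ with finite state set, finite input alphabet $\Sigma$, initial state, transitions $\Delta\subseteq Q\times\Sigma\times Q$, output alphabet $\Gamma$, labelling $\mathrm{col}:\Delta\to\Gamma$, acceptance condition $W\subseteq\Gamma^\omega$. A run on $w=a_1a_2\cdots$ is a sequence $(q_0,a_1,q_1)(q_1,a_2,q_2)\cdots$ of transitions with $q_0=q_{\mathrm{init}}$, accepting if its label sequence is in $W$; $\mathcal{L}(\mathcal{A})$ is the set of words with an accepting run. A generalised Büchi automaton with finite output colour set $C$ has $\Gamma=2^C$ and $W=\{x : \text{every } c\in C \text{ occurs in infinitely many letters of } x\}$; a Büchi automaton is the case $|C|=1$. Deterministic: for each $(p,a)$ at most one $q$ with $(p,a,q)\in\Delta$. A resolver is a map $\sigma:\Sigma^+\to\Delta$ such that for every $w=a_0a_1\cdots$, the run $\rho_\sigma(w)=\sigma(a_0)\sigma(a_0a_1)\cdots$ is a run on $w$, accepting whenever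 $w\in\mathcal{L}(\mathcal{A})$; history-deterministic means a resolver exists. A history-deterministic automaton is resolver-trim if it has a resolver $\sigma$ such that every state $q$ is visited by some accepting run of the form $\rho_\sigma(w)$. Recolouring a generalised (co)Büchi automaton with $k'$ colours means replacing its colour set and labelling by a colour set of size $k'$ and a new labelling, keeping the same states, initial state and transitions, without changing the recognised language. *)

theory Defs
  imports Main
begin

record ('q, 'a, 'c) gba =
  states :: "'q set"
  alphabet :: "'a set"
  init :: 'q
  trans :: "('q \<times> 'a \<times> 'q) set"
  colours :: "'c set"
  col :: "'q \<times> 'a \<times> 'q \<Rightarrow> 'c set"

definition gba_wf :: "('q, 'a, 'c) gba \<Rightarrow> bool" where
  "gba_wf A \<longleftrightarrow> finite (states A) \<and> finite (alphabet A) \<and> finite (colours A)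
     \<and> init A \<in> states A
     \<and> trans A \<subseteq> states A \<times> alphabet A \<times> states A
     \<and> (\<forall>t\<in>trans A. col A t \<subseteq> colours A)"

definition infwords :: "'a set \<Rightarrow> (nat \<Rightarrow> 'a) set" where
  "infwords S = {w. \<forall>i. w i \<in> S}"

definition is_run :: "('q, 'a, 'c) gba \<Rightarrow> (nat \<Rightarrow> 'a) \<Rightarrow> (nat \<Rightarrow> 'q \<times> 'a \<times> 'q) \<Rightarrow> bool" where
  "is_run A w r \<longleftrightarrow> fst (r 0) = init A
     \<and> (\<forall>i. r i \<in> trans A \<and> fst (snd (r i)) = w i \<and> snd (snd (r i)) = fst (r (Suc i)))"

definition accepting :: "('q, 'a, 'c) gba \<Rightarrow> (nat \<Rightarrow> 'q \<times> 'a \<times> 'q) \<Rightarrow> bool" where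
  "accepting A r \<longleftrightarrow> (\<forall>c\<in>colours A. \<forall>N. \<exists>i\<ge>N. c \<in> col A (r i))"

definition lang :: "('q, 'a, 'c) gba \<Rightarrow> (nat \<Rightarrow> 'a) set" where
  "lang A = {w \<in> infwords (alphabet A). \<exists>r. is_run A w r \<and> accepting A r}"

definition is_buchi :: "('q, 'a, 'c) gba \<Rightarrow> bool" where
  "is_buchi A \<longleftrightarrow> card (colours A) = 1"

definition deterministic :: "('q, 'a, 'c) gba \<Rightarrow> bool" where
  "deterministic A \<longleftrightarrow>
     (\<forall>p a q q'. (p, a, q) \<in> trans A \<and> (p, a, q') \<in> trans A \<longrightarrow> q = q')"

text \<open>A resolver is a map from nonempty finite words to transitions; the induced run
on w uses sigma applied to the prefixes of length 1, 2, ...\<close>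
definition resolver_run :: "('a list \<Rightarrow> 'q \<times> 'a \<times> 'q) \<Rightarrow> (nat \<Rightarrow> 'a) \<Rightarrow> nat \<Rightarrow> 'q \<times> 'a \<times> 'q" where
  "resolver_run \<sigma> w i = \<sigma> (map w [0..<Suc i])"

definition is_resolver :: "('q, 'a, 'c) gba \<Rightarrow> ('a list \<Rightarrow> 'q \<times> 'a \<times> 'q) \<Rightarrow> bool" where
  "is_resolver A \<sigma> \<longleftrightarrow> (\<forall>w\<in>infwords (alphabet A).
      is_run A w (resolver_run \<sigma> w)
      \<and> (w \<in> lang A \<longrightarrow> accepting A (resolver_run \<sigma> w)))"

definition history_deterministic :: "('q, 'a, 'c) gba \<Rightarrow> bool" where
  "history_deterministic A \<longleftrightarrow> (\<exists>\<sigma>. is_resolver A \<sigma>)"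

definition resolver_trim :: "('q, 'a, 'c) gba \<Rightarrow> bool" where
  "resolver_trim A \<longleftrightarrow> (\<exists>\<sigma>. is_resolver A \<sigma> \<and>
      (\<forall>q\<in>states A. \<exists>w\<in>infwords (alphabet A).
          accepting A (resolver_run \<sigma> w) \<and> (\<exists>i. fst (resolver_run \<sigma> w i) = q)))"

definition recolour :: "('q, 'a, 'c) gba \<Rightarrow> 'd set \<Rightarrow> ('q \<times> 'a \<times> 'q \<Rightarrow> 'd set) \<Rightarrow> ('q, 'a, 'd) gba" where
  "recolour A C' col' = \<lparr>states = states A, alphabet = alphabet A, init = init A,
      trans = trans A, colours = C', col = col'\<rparr>"

end

theory Submission
  imports Defs
begin


fun apath :: "('s \<times> 'a \<times> 's) set \<Rightarrow> 's \<Rightarrow> ('s \<times> 'a \<times> 's) list \<Rightarrow> 's \<Rightarrow> bool" where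
  "apath T q [] q' = (q = q')"
| "apath T q (t # ts) q' = (t \<in> T \<and> fst t = q \<and> apath T (snd (snd t)) ts q')"

lemma apath_append: "apath T q (xs @ ys) q'' = (\<exists>q'. apath T q xs q' \<and> apath T q' ys q'')"
  by (induction xs arbitrary: q) auto

lemma apath_nth: "apath T q xs q' \<Longrightarrow> i < length xs \<Longrightarrow> xs ! i \<in> T"
  by (induction xs arbitrary: q i) (auto simp: nth_Cons split: nat.splits)

lemma apath_first: "apath T q xs q' \<Longrightarrow> xs \<noteq> [] \<Longrightarrow> fst (xs ! 0) = q"
  by (cases xs) auto

lemma apath_nil: "apath T q [] q' \<Longrightarrow> q = q'" by simp

lemma apath_last: "apath T q xs q' \<Longrightarrow> xs \<noteq> [] \<Longrightarrow> snd (snd (xs ! (length xs - 1))) = q'"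
proof (induction xs arbitrary: q)
  case Nil then show ?case by simp
next
  case (Cons t ts)
  then show ?case by (cases ts) auto
qed

lemma apath_link: "apath T q xs q' \<Longrightarrow> Suc i < length xs \<Longrightarrow> snd (snd (xs ! i)) = fst (xs ! Suc i)"
proof (induction xs arbitrary: q i)
  case Nil then show ?case by simp
next
  case (Cons t ts)
  then show ?case by (cases i; cases ts) auto
qed

lemma apath_run_seg:
  assumes "\<forall>i. r i \<in> T \<and> snd (snd (r i)) = fst (r (Suc i))" "a \<le> b"
  shows "apath T (fst (r a)) (map r [a..<b]) (fst (r b))"
  using assms(2)
proof (induction b)
  case 0 then show ?case by simp
next
  case (Suc b)
  show ?case
  proof (cases "a = Suc b")
    case True then show ?thesis by simp
  next
    case False
    then have "a \<le> b" using Suc by simp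
    then show ?thesis using Suc assms(1) by (auto simp: apath_append)
  qed
qed

lemma lasso:
  assumes u: "apath T q0 u q" and c: "apath T q c q" and ne: "c \<noteq> []"
    and f_def: "f = (\<lambda>i. if i < length u then u ! i else c ! ((i - length u) mod length c))"
  shows "fst (f 0) = q0" and "f i \<in> T" and "snd (snd (f i)) = fst (f (Suc i))"
proof -
  show "fst (f 0) = q0"
  proof (cases "u = []")
    case True then show ?thesis using u c ne apath_first[OF c ne] by (simp add: f_def)
  next
    case False then show ?thesis using apath_first[OF u] by (simp add: f_def)
  qed
  show "f i \<in> T"
    using apath_nth[OF u] apath_nth[OF c] ne by (simp add: f_def)
  show "snd (snd (f i)) = fst (f (Suc i))"
  proof (cases "Suc i < length u")
    case True then show ?thesis using apath_link[OF u True] by (simp add: f_def)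
  next
    case F1: False
    show ?thesis
    proof (cases "Suc i = length u")
      case True
      then have "u \<noteq> []" by auto
      have ii: "i = length u - 1" using True by simp
      show ?thesis using apath_last[OF u \<open>u \<noteq> []\<close>] apath_first[OF c ne] True
        unfolding f_def ii by simp
    next
      case False
      with F1 have ge: "length u \<le> i" by simp
      define k where "k = i - length u"
      have si: "Suc i - length u = Suc k" using ge k_def by simp
      have fi: "f i = c ! (k mod length c)" using ge k_def by (simp add: f_def)
      have fsi: "f (Suc i) = c ! (Suc k mod length c)" using ge si by (simp add: f_def)
      have lt: "k mod length c < length c" using ne by simp
      show ?thesis
      proof (cases "Suc (k mod length c) = length c")
        case True
        then have "Suc k mod length c = 0" by (simp add: mod_Suc)
        then show ?thesis using fi fsi apath_last[OF c ne] apath_first[OF c ne] True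
          by (metis diff_Suc_1)
      next
        case False
        then have "Suc k mod length c = Suc (k mod length c)" by (simp add: mod_Suc)
        moreover have "Suc (k mod length c) < length c" using lt False by simp
        ultimately show ?thesis using fi fsi apath_link[OF c] by simp
      qed
    qed
  qed
qed

lemma det_run_unique:
  assumes det: "deterministic B" and r1: "is_run B w r1" and r2: "is_run B w r2"
  shows "r1 i = r2 i"
proof -
  have st: "fst (r1 i) = fst (r2 i)" for i
  proof (induction i)
    case 0 then show ?case using r1 r2 by (simp add: is_run_def)
  next
    case (Suc i)
    have a: "(fst (r1 i), w i, fst (r1 (Suc i))) \<in> trans B"
      using r1 unfolding is_run_def by (metis prod.collapse)
    have b: "(fst (r1 i), w i, fst (r2 (Suc i))) \<in> trans B"
      using r2 Suc unfolding is_run_def by (metis prod.collapse)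
    show ?case using det a b unfolding deterministic_def by blast
  qed
  have "r1 i = (fst (r1 i), w i, fst (r1 (Suc i)))" "r2 i = (fst (r2 i), w i, fst (r2 (Suc i)))"
    using r1 r2 unfolding is_run_def by (metis prod.collapse)+
  then show ?thesis using st[of i] st[of "Suc i"] by simp
qed

lemma cover:
  assumes "finite D"
    and app: "\<And>xs ys xs' ys'. P xs ys \<Longrightarrow> P xs' ys' \<Longrightarrow> P (xs @ xs') (ys @ ys')"
    and base: "P x0 y0"
    and each: "\<forall>d\<in>D. \<exists>xs ys. P xs ys \<and> (\<exists>t\<in>set xs. Q d t)"
  shows "\<exists>xs ys. P xs ys \<and> (\<forall>d\<in>D. \<exists>t\<in>set xs. Q d t)"
  using assms(1) each
proof (induction D rule: finite_induct)
  case empty then show ?case using base by blast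
next
  case (insert d F)
  then obtain xs ys where 1: "P xs ys" "\<forall>d\<in>F. \<exists>t\<in>set xs. Q d t" by blast
  obtain xs' ys' where 2: "P xs' ys'" "\<exists>t\<in>set xs'. Q d t" using insert by blast
  show ?case using app[OF 1(1) 2(1)] 1(2) 2(2) by fastforce
qed



definition reachp :: "('q, 'a, 'c) gba \<Rightarrow> ('p, 'a, 'b) gba \<Rightarrow> 'q \<Rightarrow> 'p \<Rightarrow> bool" where
  "reachp A B q p \<longleftrightarrow> (\<exists>ua ub. apath (trans A) (init A) ua q \<and> apath (trans B) (init B) ub p
      \<and> map (\<lambda>t. fst (snd t)) ua = map (\<lambda>t. fst (snd t)) ub)"

definition cycp :: "('q, 'a, 'c) gba \<Rightarrow> ('p, 'a, 'b) gba \<Rightarrow> 'b \<Rightarrow> 'q \<Rightarrow> 'p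
   \<Rightarrow> ('q \<times> 'a \<times> 'q) list \<Rightarrow> ('p \<times> 'a \<times> 'p) list \<Rightarrow> bool" where
  "cycp A B cb q p xs ys \<longleftrightarrow> apath (trans A) q xs q \<and> apath (trans B) p ys p
      \<and> map (\<lambda>t. fst (snd t)) xs = map (\<lambda>t. fst (snd t)) ys \<and> xs \<noteq> []
      \<and> (\<forall>t\<in>set ys. cb \<notin> col B t)"

definition inN :: "('q, 'a, 'c) gba \<Rightarrow> ('p, 'a, 'b) gba \<Rightarrow> 'b \<Rightarrow> 'q \<Rightarrow> 'p \<Rightarrow> 'q \<times> 'a \<times> 'q \<Rightarrow> bool" where
  "inN A B cb q p e \<longleftrightarrow> reachp A B q p \<and> (\<exists>xs ys. cycp A B cb q p xs ys \<and> e \<in> set xs)"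

lemma cycp_app: "cycp A B cb q p xs ys \<Longrightarrow> cycp A B cb q p xs' ys' \<Longrightarrow> cycp A B cb q p (xs @ xs') (ys @ ys')"
  unfolding cycp_def by (auto simp: apath_append)

lemma no_bad_cycle:
  fixes A :: "('q, 'a, 'c) gba" and B :: "('p, 'a, 'b) gba"
  assumes wfA: "gba_wf A" and det: "deterministic B" and colB: "colours B = {cb}"
    and alph: "alphabet B = alphabet A" and lang: "lang B = lang A"
    and reach: "reachp A B q p" and cyc: "cycp A B cb q p xs ys"
    and cov: "\<forall>d\<in>colours A. \<exists>t\<in>set xs. d \<in> col A t"
  shows False
proof -
  obtain ua ub where ua: "apath (trans A) (init A) ua q" and ub: "apath (trans B) (init B) ub p"
    and mu: "map (\<lambda>t. fst (snd t)) ua = map (\<lambda>t. fst (snd t)) ub"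
    using reach unfolding reachp_def by blast
  have xs: "apath (trans A) q xs q" and ys: "apath (trans B) p ys p"
    and mx: "map (\<lambda>t. fst (snd t)) xs = map (\<lambda>t. fst (snd t)) ys" and ne: "xs \<noteq> []"
    and nac: "\<forall>t\<in>set ys. cb \<notin> col B t"
    using cyc unfolding cycp_def by auto
  have lu: "length ua = length ub" using arg_cong[OF mu, of length] by simp
  have lx: "length xs = length ys" using arg_cong[OF mx, of length] by simp
  have ney: "ys \<noteq> []" using ne lx by auto
  define ra where "ra = (\<lambda>i. if i < length ua then ua ! i else xs ! ((i - length ua) mod length xs))"
  define rb where "rb = (\<lambda>i. if i < length ub then ub ! i else ys ! ((i - length ub) mod length ys))"
  define w where "w = (\<lambda>i. fst (snd (ra i)))"
  have LA: "fst (ra 0) = init A" "\<And>i. ra i \<in> trans A" "\<And>i. snd (snd (ra i)) = fst (ra (Suc i))"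
    by (rule lasso(1)[OF ua xs ne ra_def], rule lasso(2)[OF ua xs ne ra_def], rule lasso(3)[OF ua xs ne ra_def])
  have LB: "fst (rb 0) = init B" "\<And>i. rb i \<in> trans B" "\<And>i. snd (snd (rb i)) = fst (rb (Suc i))"
    by (rule lasso(1)[OF ub ys ney rb_def], rule lasso(2)[OF ub ys ney rb_def], rule lasso(3)[OF ub ys ney rb_def])
  have lab: "fst (snd (rb i)) = w i" for i
  proof (cases "i < length ua")
    case True
    have "map (\<lambda>t. fst (snd t)) ua ! i = map (\<lambda>t. fst (snd t)) ub ! i" using mu by simp
    then show ?thesis using True lu by (simp add: w_def ra_def rb_def)
  next
    case False
    have k: "(i - length ua) mod length xs < length xs" using ne by simp
    have "map (\<lambda>t. fst (snd t)) xs ! ((i - length ua) mod length xs)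
        = map (\<lambda>t. fst (snd t)) ys ! ((i - length ua) mod length xs)" using mx by simp
    then show ?thesis using False lu lx k by (simp add: w_def ra_def rb_def)
  qed
  have runA: "is_run A w ra" unfolding is_run_def using LA w_def by auto
  have runB: "is_run B w rb" unfolding is_run_def using LB lab by auto
  have accA: "accepting A ra" unfolding accepting_def
  proof (intro ballI allI)
    fix d N assume "d \<in> colours A"
    then obtain t where "t \<in> set xs" "d \<in> col A t" using cov by blast
    then obtain k where k: "k < length xs" "xs ! k = t" by (metis in_set_conv_nth)
    define i where "i = length ua + N * length xs + k"
    have "N \<le> N * length xs" using ne by (cases xs) auto
    then have "i \<ge> N" unfolding i_def by linarith
    moreover have "ra i = t" unfolding ra_def i_def using k by simp
    ultimately show "\<exists>i\<ge>N. d \<in> col A (ra i)" using \<open>d \<in> col A t\<close> by blast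
  qed
  have "fst (snd (ra i)) \<in> alphabet A" for i
  proof -
    have "ra i \<in> states A \<times> alphabet A \<times> states A" using LA(2)[of i] wfA unfolding gba_wf_def by auto
    then show ?thesis by auto
  qed
  then have "w \<in> infwords (alphabet A)"
    unfolding infwords_def w_def by simp
  then have "w \<in> lang A" unfolding lang_def using runA accA by blast
  then have "w \<in> lang B" using lang by simp
  then obtain r' where r': "is_run B w r'" "accepting B r'" unfolding lang_def by blast
  have "r' = rb" by (rule ext, rule det_run_unique[OF det r'(1) runB])
  have "\<exists>i\<ge>length ub. cb \<in> col B (r' i)" using r'(2) colB unfolding accepting_def by simp
  then obtain i where i: "i \<ge> length ub" "cb \<in> col B (rb i)" using \<open>r' = rb\<close> by blast
  have "(i - length ub) mod length ys < length ys" using ney by simp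
  then have "rb i \<in> set ys" using i(1) unfolding rb_def by simp
  then show False using nac i(2) by blast
qed

lemma complete:
  fixes A :: "('q, 'a, 'c) gba" and B :: "('p, 'a, 'b) gba"
  assumes wfA: "gba_wf A" and det: "deterministic B" and colB: "colours B = {cb}"
    and alph: "alphabet B = alphabet A" and lang: "lang B = lang A"
    and run: "is_run A w r" and acc: "accepting A r"
  shows "\<exists>i\<ge>N. \<not> inN A B cb q p (r i)"
proof (rule ccontr)
  assume "\<not> ?thesis"
  then have all: "\<forall>i\<ge>N. inN A B cb q p (r i)" by auto
  then have reach: "reachp A B q p" and "\<exists>xs ys. cycp A B cb q p xs ys \<and> r N \<in> set xs"
    unfolding inN_def by auto
  then obtain x0 y0 where base: "cycp A B cb q p x0 y0" by blast
  have each: "\<forall>d\<in>colours A. \<exists>xs ys. cycp A B cb q p xs ys \<and> (\<exists>t\<in>set xs. d \<in> col A t)"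
  proof
    fix d assume "d \<in> colours A"
    then obtain i where "i \<ge> N" "d \<in> col A (r i)" using acc unfolding accepting_def by blast
    then show "\<exists>xs ys. cycp A B cb q p xs ys \<and> (\<exists>t\<in>set xs. d \<in> col A t)"
      using all unfolding inN_def by blast
  qed
  have "finite (colours A)" using wfA unfolding gba_wf_def by simp
  from cover[where P="cycp A B cb q p" and Q="\<lambda>d t. d \<in> col A t", OF this cycp_app base each]
  obtain xs ys where "cycp A B cb q p xs ys" "\<forall>d\<in>colours A. \<exists>t\<in>set xs. d \<in> col A t" by blast
  then show False using no_bad_cycle[OF wfA det colB alph lang reach] by blast
qed



lemma sound:
  fixes A :: "('q, 'a, 'c) gba" and B :: "('p, 'a, 'b) gba"
  assumes wfA: "gba_wf A" and wfB: "gba_wf B" and det: "deterministic B" and colB: "colours B = {cb}"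
    and alph: "alphabet B = alphabet A" and lang: "lang B = lang A"
    and res: "is_resolver A \<sigma>"
    and trim: "\<forall>q\<in>states A. \<exists>v\<in>infwords (alphabet A).
          accepting A (resolver_run \<sigma> v) \<and> (\<exists>j. fst (resolver_run \<sigma> v j) = q)"
    and run: "is_run A w r"
    and hyp: "\<forall>q\<in>states A. \<forall>p\<in>states B. \<forall>N. \<exists>i\<ge>N. \<not> inN A B cb q p (r i)"
  shows "w \<in> lang A"
proof -
  have rT: "r i \<in> trans A" and rL: "fst (snd (r i)) = w i"
    and rC: "snd (snd (r i)) = fst (r (Suc i))" and r0: "fst (r 0) = init A" for i
    using run unfolding is_run_def by auto
  have rS: "r i \<in> states A \<times> alphabet A \<times> states A" for i
    using rT[of i] wfA unfolding gba_wf_def by auto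
  have stA: "fst (r i) \<in> states A" for i using rS[of i] by auto
  have walpha: "w i \<in> alphabet A" for i using rS[of i] rL[of i] by auto
  have ext: "\<exists>w' r'. is_run B w' r' \<and> (\<forall>i<n. w' i = w i)" for n
  proof -
    obtain v j where v: "v \<in> infwords (alphabet A)" "accepting A (resolver_run \<sigma> v)"
      "fst (resolver_run \<sigma> v j) = fst (r n)"
      using trim stA[of n] by blast
    define rs where "rs = resolver_run \<sigma> v"
    have rsrun: "is_run A v rs" using res v(1) unfolding is_resolver_def rs_def by blast
    have sT: "rs i \<in> trans A" and sL: "fst (snd (rs i)) = v i"
      and sC: "snd (snd (rs i)) = fst (rs (Suc i))" for i
      using rsrun unfolding is_run_def by auto
    define w' where "w' = (\<lambda>i. if i < n then w i else v (i - n + j))"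
    define r' where "r' = (\<lambda>i. if i < n then r i else rs (i - n + j))"
    have "is_run A w' r'"
      unfolding is_run_def
    proof (intro conjI allI)
      show "fst (r' 0) = init A"
        using r0 v(3) unfolding r'_def rs_def by (cases n) auto
      fix i
      show "r' i \<in> trans A" using rT sT unfolding r'_def by simp
      show "fst (snd (r' i)) = w' i" using rL sL unfolding r'_def w'_def by simp
      show "snd (snd (r' i)) = fst (r' (Suc i))"
      proof (cases "Suc i < n")
        case True then show ?thesis using rC unfolding r'_def by simp
      next
        case False
        show ?thesis
        proof (cases "Suc i = n")
          case True
          then show ?thesis using rC[of i] v(3) unfolding r'_def rs_def by simp
        next
          case False
          then have "n \<le> i" "Suc i - n + j = Suc (i - n + j)" using \<open>\<not> Suc i < n\<close> by auto
          then show ?thesis using sC[of "i - n + j"] unfolding r'_def by simp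
        qed
      qed
    qed
    moreover have "accepting A r'"
      unfolding accepting_def
    proof (intro ballI allI)
      fix c N assume c: "c \<in> colours A"
      obtain i where i: "i \<ge> N + j" "c \<in> col A (rs i)"
        using v(2) c unfolding accepting_def rs_def by blast
      define i' where "i' = i - j + n"
      have "i' \<ge> N" "\<not> i' < n" "i' - n + j = i" using i(1) unfolding i'_def by auto
      then show "\<exists>i\<ge>N. c \<in> col A (r' i)" using i(2) unfolding r'_def by metis
    qed
    moreover have "w' \<in> infwords (alphabet A)"
      using walpha v(1) unfolding infwords_def w'_def by auto
    ultimately have "w' \<in> lang B" using lang unfolding lang_def by blast
    then obtain rb' where "is_run B w' rb'" unfolding lang_def by blast
    moreover have "\<forall>i<n. w' i = w i" unfolding w'_def by simp
    ultimately show ?thesis by blast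
  qed
  define stB where "stB = rec_nat (init B) (\<lambda>i s. THE s'. (s, w i, s') \<in> trans B)"
  have stB0: "stB 0 = init B" and stBS: "stB (Suc i) = (THE s'. (stB i, w i, s') \<in> trans B)" for i
    unfolding stB_def by simp_all
  have agree: "fst (r' i) = stB i"
    if rr: "is_run B w' r'" and ww: "\<forall>i<n. w' i = w i" and "i \<le> n" for w' r' n i
    using \<open>i \<le> n\<close>
  proof (induction i)
    case 0 then show ?case using rr stB0 unfolding is_run_def by simp
  next
    case (Suc i)
    have "r' i = (fst (r' i), w' i, fst (r' (Suc i)))" "r' i \<in> trans B"
      using rr unfolding is_run_def by (metis prod.collapse)+
    then have tr: "(stB i, w i, fst (r' (Suc i))) \<in> trans B"
      using Suc ww by (metis Suc_le_lessD Suc_leD)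
    have "(THE s'. (stB i, w i, s') \<in> trans B) = fst (r' (Suc i))"
      by (rule the_equality, rule tr) (use det tr in \<open>auto simp: deterministic_def\<close>)
    then show ?case using stBS by simp
  qed
  have tB: "(stB i, w i, stB (Suc i)) \<in> trans B" for i
  proof -
    obtain w' r' where rr: "is_run B w' r'" and ww: "\<forall>k<Suc i. w' k = w k" using ext by blast
    have "r' i = (fst (r' i), w' i, fst (r' (Suc i)))" "r' i \<in> trans B"
      using rr unfolding is_run_def by (metis prod.collapse)+
    then show ?thesis using agree[OF rr ww, of i] agree[OF rr ww, of "Suc i"] ww by simp
  qed
  have stBS': "stB i \<in> states B" for i
  proof (cases i)
    case 0 then show ?thesis using stB0 wfB unfolding gba_wf_def by simp
  next
    case (Suc k)
    have "(stB k, w k, stB (Suc k)) \<in> states B \<times> alphabet B \<times> states B"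
      using tB[of k] wfB unfolding gba_wf_def by blast
    then show ?thesis using Suc by simp
  qed
  define rb where "rb = (\<lambda>i. (stB i, w i, stB (Suc i)))"
  have runB: "is_run B w rb" unfolding is_run_def rb_def using tB stB0 by simp
  have accB: "accepting B rb"
  proof (rule ccontr)
    assume "\<not> accepting B rb"
    then obtain N where N: "\<forall>i\<ge>N. cb \<notin> col B (rb i)"
      using colB unfolding accepting_def by auto
    define pr where "pr = (\<lambda>i. (fst (r i), stB i))"
    have "infinite {N..}" by (simp add: infinite_Ici)
    moreover have "finite (pr ` {N..})"
    proof (rule finite_subset)
      show "pr ` {N..} \<subseteq> states A \<times> states B" using stA stBS' unfolding pr_def by auto
      show "finite (states A \<times> states B)" using wfA wfB unfolding gba_wf_def by simp
    qed
    ultimately obtain i0 where i0: "i0 \<in> {N..}" and inf: "infinite {a \<in> {N..}. pr a = pr i0}"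
      using pigeonhole_infinite by blast
    define q where "q = fst (r i0)"
    define p where "p = stB i0"
    have qS: "q \<in> states A" and pS: "p \<in> states B" using stA stBS' unfolding q_def p_def by auto
    have chA: "\<forall>i. r i \<in> trans A \<and> snd (snd (r i)) = fst (r (Suc i))" using rT rC by simp
    have chB: "\<forall>i. rb i \<in> trans B \<and> snd (snd (rb i)) = fst (rb (Suc i))" using tB unfolding rb_def by simp
    have fB: "fst (rb i) = stB i" for i unfolding rb_def by simp
    have lA: "map (\<lambda>t. fst (snd t)) (map r [a..<b]) = map w [a..<b]" for a b using rL by simp
    have lB: "map (\<lambda>t. fst (snd t)) (map rb [a..<b]) = map w [a..<b]" for a b unfolding rb_def by simp
    have reach: "reachp A B q p"
      unfolding reachp_def
    proof (intro exI conjI)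
      show "apath (trans A) (init A) (map r [0..<i0]) q"
        using apath_run_seg[OF chA, of 0 i0] r0 unfolding q_def by simp
      show "apath (trans B) (init B) (map rb [0..<i0]) p"
        using apath_run_seg[OF chB, of 0 i0] fB[of 0] fB[of i0] stB0 unfolding p_def by simp
      show "map (\<lambda>t. fst (snd t)) (map r [0..<i0]) = map (\<lambda>t. fst (snd t)) (map rb [0..<i0])"
        by (simp only: lA lB)
    qed
    have "inN A B cb q p (r i)" if "i \<ge> i0" for i
    proof -
      have "\<not> (\<forall>n\<in>{a \<in> {N..}. pr a = pr i0}. n < Suc i)"
        using inf unfolding finite_nat_set_iff_bounded by blast
      then obtain i2 where i2: "i2 > i" "i2 \<in> {a \<in> {N..}. pr a = pr i0}"
        by (meson Suc_le_eq not_less)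
      have q2: "fst (r i2) = q" and p2: "stB i2 = p" using i2(2) unfolding pr_def q_def p_def by auto
      have "cycp A B cb q p (map r [i0..<i2]) (map rb [i0..<i2])"
        unfolding cycp_def
      proof (intro conjI)
        show "apath (trans A) q (map r [i0..<i2]) q"
          using apath_run_seg[OF chA, of i0 i2] i2(1) that q2 unfolding q_def by simp
        show "apath (trans B) p (map rb [i0..<i2]) p"
          using apath_run_seg[OF chB, of i0 i2] i2(1) that fB[of i0] fB[of i2] p2 unfolding p_def by simp
        show "map (\<lambda>t. fst (snd t)) (map r [i0..<i2]) = map (\<lambda>t. fst (snd t)) (map rb [i0..<i2])"
          by (simp only: lA lB)
        show "map r [i0..<i2] \<noteq> []" using i2(1) that by simp
        show "\<forall>t\<in>set (map rb [i0..<i2]). cb \<notin> col B t" using N i0 by auto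
      qed
      moreover have "r i \<in> set (map r [i0..<i2])" using i2(1) that by auto
      ultimately show ?thesis using reach unfolding inN_def by blast
    qed
    then show False using hyp qS pS by blast
  qed
  have "w \<in> infwords (alphabet B)" using walpha alph unfolding infwords_def by simp
  then have "w \<in> lang B" using runB accB unfolding lang_def by blast
  then show ?thesis using lang by simp
qed



lemma run_recolour: "is_run (recolour A C c) = is_run A"
  by (auto simp: fun_eq_iff is_run_def recolour_def)

lemma acc_recolour: "accepting (recolour A C c) r = (\<forall>k\<in>C. \<forall>N. \<exists>i\<ge>N. k \<in> c (r i))"
  by (simp add: accepting_def recolour_def)

lemma lang_recolour: "lang (recolour A C c) = {w \<in> infwords (alphabet A). \<exists>r. is_run A w r \<and> accepting (recolour A C c) r}"
  by (simp add: lang_def run_recolour) (simp add: recolour_def)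

theorem lemma42:
  fixes A :: "('q, 'a, 'c) gba" and B :: "('p, 'a, 'b) gba"
  assumes "gba_wf A" and "history_deterministic A" and "resolver_trim A"
    and "gba_wf B" and "is_buchi B" and "deterministic B"
    and "alphabet B = alphabet A" and "lang B = lang A"
  shows "\<exists>(C' :: nat set) col'.
           finite C' \<and> card C' \<le> card (states A) * card (states B)
           \<and> gba_wf (recolour A C' col')
           \<and> lang (recolour A C' col') = lang A
           \<and> history_deterministic (recolour A C' col')
           \<and> resolver_trim (recolour A C' col')"
proof -
  note wfA = assms(1) and wfB = assms(4) and det = assms(6) and alph = assms(7) and lang = assms(8)
  obtain \<sigma> where res: "is_resolver A \<sigma>" and trim: "\<forall>q\<in>states A. \<exists>v\<in>infwords (alphabet A).
          accepting A (resolver_run \<sigma> v) \<and> (\<exists>j. fst (resolver_run \<sigma> v j) = q)"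
    using assms(3) unfolding resolver_trim_def by blast
  obtain cb where colB: "colours B = {cb}" using assms(5) unfolding is_buchi_def by (meson card_1_singletonE)
  define S where "S = states A \<times> states B"
  have finS: "finite S" using wfA wfB unfolding S_def gba_wf_def by simp
  obtain g :: "'q \<times> 'p \<Rightarrow> nat" and m where inj: "inj_on g S" and "g ` S = {i. i < m}"
    using finite_imp_inj_to_nat_seg[OF finS] by blast
  define C' where "C' = g ` S"
  define col' where "col' = (\<lambda>e. g ` {x \<in> S. \<not> inN A B cb (fst x) (snd x) e})"
  let ?A' = "recolour A C' col'"
  have finC: "finite C'" using finS unfolding C'_def by simp
  have cardC: "card C' \<le> card (states A) * card (states B)"
    unfolding C'_def using card_image_le[OF finS] by (simp add: S_def card_cartesian_product)
  have wf': "gba_wf ?A'"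
    using wfA finC unfolding gba_wf_def recolour_def col'_def C'_def by auto
  have acc_iff: "accepting ?A' r \<longleftrightarrow> (\<forall>q\<in>states A. \<forall>p\<in>states B. \<forall>N. \<exists>i\<ge>N. \<not> inN A B cb q p (r i))" for r
  proof -
    have mem: "g x \<in> col' e \<longleftrightarrow> \<not> inN A B cb (fst x) (snd x) e" if "x \<in> S" for x e
      unfolding col'_def using inj_on_image_mem_iff[OF inj that, of "{x \<in> S. \<not> inN A B cb (fst x) (snd x) e}"] that
      by auto
    show ?thesis unfolding acc_recolour C'_def
      using mem by (auto simp: S_def)
  qed
  have accA: "accepting ?A' r" if "is_run A w r" "accepting A r" for w r
    unfolding acc_iff using complete[OF wfA det colB alph lang that] by blast
  have langeq: "lang ?A' = lang A"
  proof
    show "lang ?A' \<subseteq> lang A"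
      unfolding lang_recolour acc_iff using sound[OF wfA wfB det colB alph lang res trim] by blast
    show "lang A \<subseteq> lang ?A'"
      unfolding lang_recolour using accA unfolding lang_def by blast
  qed
  have res': "is_resolver ?A' \<sigma>"
    unfolding is_resolver_def
  proof
    fix w assume w: "w \<in> infwords (alphabet ?A')"
    then have w': "w \<in> infwords (alphabet A)" by (simp add: recolour_def)
    have r: "is_run A w (resolver_run \<sigma> w)" and "w \<in> lang A \<longrightarrow> accepting A (resolver_run \<sigma> w)"
      using res w' unfolding is_resolver_def by auto
    then show "is_run ?A' w (resolver_run \<sigma> w) \<and> (w \<in> lang ?A' \<longrightarrow> accepting ?A' (resolver_run \<sigma> w))"
      using accA langeq by (simp add: run_recolour)
  qed
  have trim': "resolver_trim ?A'"
    unfolding resolver_trim_def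
  proof (intro exI conjI ballI)
    show "is_resolver ?A' \<sigma>" by (rule res')
    fix q assume "q \<in> states ?A'"
    then have "q \<in> states A" by (simp add: recolour_def)
    then obtain v where v: "v \<in> infwords (alphabet A)" "accepting A (resolver_run \<sigma> v)"
      "\<exists>j. fst (resolver_run \<sigma> v j) = q" using trim by blast
    have "is_run A v (resolver_run \<sigma> v)" using res v(1) unfolding is_resolver_def by blast
    then have "accepting ?A' (resolver_run \<sigma> v)" using accA v(2) by blast
    then show "\<exists>w\<in>infwords (alphabet ?A'). accepting ?A' (resolver_run \<sigma> w) \<and> (\<exists>i. fst (resolver_run \<sigma> w i) = q)"
      using v by (auto simp: recolour_def)
  qed
  show ?thesis
    using finC cardC wf' langeq res' trim' unfolding history_deterministic_def by blast
qed


end
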